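(* For a non-negative integer $n$ and real $x>0$ small, define $$A_n(x)=2\ln(n!\,x)+\ln|\Gamma(-n-x)|+\ln|\Gamma(-n+x)|-x^2\sum_{k=1}^n\frac1{k^2}.$$ Then for every non-negative integer $n$, $$\lim_{x\to0^+}\frac{1}{x^2}\left[1-\frac{A_n(x)}{A_{n+1}(x)}\right]=\frac{3}{(n+1)^4\pi^2}=\frac{1}{2(n+1)^4\zeta(2)}.$$
   Context: $\Gamma$ is Euler's Gamma function on the real line and $\zeta$ is the Riemann zeta function. *)

theory Defs
  imports "HOL-Analysis.Analysis"
begin

definition A :: "nat \<Rightarrow> real \<Rightarrow> real" where
  "A n x = 2 * ln (fact n * x) + ln \<bar>Gamma (- real n - x)\<bar> + ln \<bar>Gamma (- real n + x)\<bar>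
           - x\<^sup>2 * (\<Sum>k=1..n. 1 / (real k)\<^sup>2)"

definition zeta :: "real \<Rightarrow> real" where
  "zeta s = (\<Sum>k. 1 / (real (Suc k)) powr s)"

end

theory Submission
  imports Defs "HOL-Real_Asymp.Real_Asymp"
begin

lemma notint01: assumes "0 < x" "x < 1" "(x::real) \<in> \<int>" shows False
proof -
  from assms(3) obtain m where "x = of_int m" by (auto elim: Ints_cases)
  with assms(1,2) have "0 < m" "m < 1" by auto
  thus False by simp
qed

lemma noZ:
  assumes "0 < x" "x < (1::real)"
  shows "- real n - x \<notin> \<int>\<^sub>\<le>\<^sub>0" "- real n + x \<notin> \<int>\<^sub>\<le>\<^sub>0"
proof -
  show "- real n - x \<notin> \<int>\<^sub>\<le>\<^sub>0"
  proof
    assume "- real n - x \<in> \<int>\<^sub>\<le>\<^sub>0"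
    hence "- real n - x \<in> \<int>" using nonpos_Ints_subset_Ints by blast
    hence "- (- real n - x) - real n \<in> \<int>" by (intro Ints_diff Ints_minus) auto
    thus False using notint01[OF assms] by simp
  qed
  show "- real n + x \<notin> \<int>\<^sub>\<le>\<^sub>0"
  proof
    assume "- real n + x \<in> \<int>\<^sub>\<le>\<^sub>0"
    hence "- real n + x \<in> \<int>" using nonpos_Ints_subset_Ints by blast
    hence "(- real n + x) + real n \<in> \<int>" by (intro Ints_add) auto
    thus False using notint01[OF assms] by simp
  qed
qed

lemma Gamma_refl_real:
  fixes x :: real
  shows "Gamma x * Gamma (- x) = - pi / (x * sin (pi * x))"
proof -
  have "Gamma (complex_of_real x) * Gamma (- complex_of_real x)
        = - of_real pi / (complex_of_real x * sin (of_real pi * complex_of_real x))"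
    by (rule Gamma_reflection_complex')
  hence "complex_of_real (Gamma x * Gamma (- x)) = complex_of_real (- pi / (x * sin (pi * x)))"
    by (simp add: Gamma_complex_of_real sin_of_real flip: of_real_minus of_real_mult of_real_divide)
  thus ?thesis by (simp only: of_real_eq_iff)
qed

lemma A0:
  assumes "0 < x" "x < 1"
  shows "A 0 x = ln (pi * x / sin (pi * x))"
proof -
  have s: "sin (pi * x) > 0" using assms by (intro sin_gt_zero) auto
  have g1: "Gamma x > 0" using assms by simp
  have g2: "Gamma (- x) \<noteq> 0" using noZ(1)[OF assms, of 0] by (simp add: Gamma_eq_zero_iff)
  have "\<bar>Gamma (- x)\<bar> * \<bar>Gamma x\<bar> = pi / (x * sin (pi * x))"
  proof -
    have "\<bar>Gamma (- x)\<bar> * \<bar>Gamma x\<bar> = \<bar>Gamma x * Gamma (- x)\<bar>" by (simp add: abs_mult)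
    also have "\<dots> = pi / (x * sin (pi * x))" using Gamma_refl_real[of x] s assms by simp
    finally show ?thesis .
  qed
  have "A 0 x = ln (x^2) + ln (\<bar>Gamma (- x)\<bar> * \<bar>Gamma x\<bar>)"
    unfolding A_def using assms g1 g2 by (simp add: ln_mult ln_realpow less_imp_neq[OF g1, symmetric])
  also have "\<dots> = ln (x^2 * (\<bar>Gamma (- x)\<bar> * \<bar>Gamma x\<bar>))"
    using assms g1 g2 by (simp add: ln_mult less_imp_neq[OF g1, symmetric])
  also have "x^2 * (\<bar>Gamma (- x)\<bar> * \<bar>Gamma x\<bar>) = pi * x / sin (pi * x)"
    using \<open>\<bar>Gamma (- x)\<bar> * \<bar>Gamma x\<bar> = _\<close> assms by (simp add: power2_eq_square)
  finally show ?thesis .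
qed

definition cc :: "nat \<Rightarrow> real" where "cc k = 1 / (real k + 1)^2"
definition D :: "nat \<Rightarrow> real \<Rightarrow> real" where "D k x = - ln (1 - cc k * x^2) - cc k * x^2"

lemma Astep:
  assumes "0 < x" "x < 1"
  shows "A (Suc n) x = A n x + D n x"
proof -
  define m where "m = real n + 1"
  have m: "m \<ge> 1" "m - x > 0" "m + x > 0" using assms by (auto simp: m_def)
  have e1: "Gamma (- real n - x) = (- m - x) * Gamma (- real (Suc n) - x)"
  proof -
    have "Gamma ((- real (Suc n) - x) + 1) = (- real (Suc n) - x) * Gamma (- real (Suc n) - x)"
      by (rule Gamma_plus1) (rule noZ(1)[OF assms])
    moreover have "(- real (Suc n) - x) + 1 = - real n - x" by simp
    ultimately show ?thesis by (simp add: m_def)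
  qed
  have e2: "Gamma (- real n + x) = (- m + x) * Gamma (- real (Suc n) + x)"
  proof -
    have "Gamma ((- real (Suc n) + x) + 1) = (- real (Suc n) + x) * Gamma (- real (Suc n) + x)"
      by (rule Gamma_plus1) (rule noZ(2)[OF assms])
    moreover have "(- real (Suc n) + x) + 1 = - real n + x" by simp
    ultimately show ?thesis by (simp add: m_def)
  qed
  have n1: "Gamma (- real (Suc n) - x) \<noteq> 0" "Gamma (- real (Suc n) + x) \<noteq> 0"
    using noZ[OF assms, of "Suc n"] by (auto simp: Gamma_eq_zero_iff)
  have l1: "ln \<bar>Gamma (- real n - x)\<bar> = ln (m + x) + ln \<bar>Gamma (- real (Suc n) - x)\<bar>"
    unfolding e1 using m n1 by (simp add: abs_mult ln_mult)
  have l2: "ln \<bar>Gamma (- real n + x)\<bar> = ln (m - x) + ln \<bar>Gamma (- real (Suc n) + x)\<bar>"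
    unfolding e2 using m n1 by (simp add: abs_mult ln_mult)
  have l3: "ln (fact (Suc n) * x) = ln m + ln (fact n * x)"
    using assms by (simp add: m_def ln_mult fact_Suc mult.assoc)
  have l4: "1 - cc n * x^2 = (m + x) * (m - x) / m^2"
  proof -
    have "cc n = 1 / m^2" by (simp add: cc_def m_def)
    thus ?thesis using m by (simp add: field_simps power2_eq_square)
  qed
  have l5: "ln (1 - cc n * x^2) = ln (m + x) + ln (m - x) - 2 * ln m"
    unfolding l4 using m by (simp add: ln_mult ln_div ln_realpow)
  have sm: "(\<Sum>k=1..Suc n. 1 / (real k)\<^sup>2) = (\<Sum>k=1..n. 1 / (real k)\<^sup>2) + cc n"
    by (simp add: cc_def add.commute)
  show ?thesis
    unfolding A_def D_def l5 sm using l1 l2 l3 by (simp add: m_def algebra_simps)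
qed

lemma Asum:
  assumes "0 < x" "x < 1"
  shows "A n x = ln (pi * x / sin (pi * x)) + (\<Sum>k<n. D k x)"
  by (induction n) (simp_all add: A0[OF assms] Astep[OF assms])

lemma lim0: "((\<lambda>x::real. ln(pi*x/sin(pi*x))/x^2) \<longlongrightarrow> pi * (inverse pi * (inverse pi * (pi * (pi * pi)))) / 6) (at_right 0)"
  by real_asymp

lemma limD0: assumes "c > 0" shows "((\<lambda>x::real. (-ln(1 - c*x^2) - c*x^2)/x^4) \<longlongrightarrow> c * c / 2) (at_right 0)"
  using assms by real_asymp

lemma limD: "((\<lambda>x. D k x / x^4) \<longlongrightarrow> cc k * cc k / 2) (at_right 0)"
  unfolding D_def by (rule limD0) (simp add: cc_def)

lemma limA: "((\<lambda>x. A n x / x^2) \<longlongrightarrow> pi^2/6) (at_right 0)"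
proof -
  have ev: "eventually (\<lambda>x. ln(pi*x/sin(pi*x))/x^2 + (\<Sum>k<n. (D k x / x^4) * x^2) = A n x / x^2) (at_right (0::real))"
    using eventually_at_right_real[OF zero_less_one]
  proof (rule eventually_mono)
    fix x :: real assume "x \<in> {0<..<1}"
    hence x: "0 < x" "x < 1" by auto
    have "(\<Sum>k<n. (D k x / x^4) * x^2) = (\<Sum>k<n. D k x) / x^2"
      unfolding sum_divide_distrib using x by (intro sum.cong) (auto simp: field_simps power2_eq_square power4_eq_xxxx)
    thus "ln(pi*x/sin(pi*x))/x^2 + (\<Sum>k<n. (D k x / x^4) * x^2) = A n x / x^2"
      using Asum[OF x, of n] by (simp add: add_divide_distrib)
  qed
  have x2: "((\<lambda>x::real. x^2) \<longlongrightarrow> 0) (at_right 0)" by real_asymp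
  have "((\<lambda>x. ln(pi*x/sin(pi*x))/x^2 + (\<Sum>k<n. (D k x / x^4) * x^2)) \<longlongrightarrow>
         pi * (inverse pi * (inverse pi * (pi * (pi * pi)))) / 6 + (\<Sum>k<n. (cc k * cc k / 2) * 0)) (at_right 0)"
    by (intro tendsto_add lim0 tendsto_sum tendsto_mult limD x2)
  hence "((\<lambda>x. A n x / x^2) \<longlongrightarrow> pi * (inverse pi * (inverse pi * (pi * (pi * pi)))) / 6 + (\<Sum>k<n. (cc k * cc k / 2) * 0)) (at_right 0)"
    using ev by (rule Lim_transform_eventually)
  moreover have "pi * (inverse pi * (inverse pi * (pi * (pi * pi)))) / 6 + (\<Sum>k<n. (cc k * cc k / 2) * 0) = pi^2/6"
    by (simp add: power2_eq_square field_simps)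
  ultimately show ?thesis by simp
qed

theorem mainTheorem5:
  fixes n :: nat
  shows "((\<lambda>x. (1 / x\<^sup>2) * (1 - A n x / A (Suc n) x))
            \<longlongrightarrow> 3 / ((real n + 1) ^ 4 * pi\<^sup>2)) (at_right 0)
         \<and> 3 / ((real n + 1) ^ 4 * pi\<^sup>2) = 1 / (2 * (real n + 1) ^ 4 * zeta 2)"
proof
  have pos: "eventually (\<lambda>x. A (Suc n) x / x^2 > 0) (at_right (0::real))"
    using limA[of "Suc n"] by (rule order_tendstoD) simp
  have ev: "eventually (\<lambda>x. (D n x / x^4) / (A (Suc n) x / x^2) = (1 / x\<^sup>2) * (1 - A n x / A (Suc n) x)) (at_right (0::real))"
    using eventually_conj[OF pos eventually_at_right_real[OF zero_less_one]]
  proof (rule eventually_mono)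
    fix x :: real assume h: "A (Suc n) x / x^2 > 0 \<and> x \<in> {0<..<1}"
    hence x: "0 < x" "x < 1" and a: "A (Suc n) x \<noteq> 0" by auto
    have "A n x = A (Suc n) x - D n x" using Astep[OF x, of n] by simp
    thus "(D n x / x^4) / (A (Suc n) x / x^2) = (1 / x\<^sup>2) * (1 - A n x / A (Suc n) x)"
      using x a by (simp add: field_simps power2_eq_square power4_eq_xxxx)
  qed
  have "((\<lambda>x. (D n x / x^4) / (A (Suc n) x / x^2)) \<longlongrightarrow> (cc n * cc n / 2) / (pi^2/6)) (at_right 0)"
    by (intro tendsto_divide limD limA) simp
  hence "((\<lambda>x. (1 / x\<^sup>2) * (1 - A n x / A (Suc n) x)) \<longlongrightarrow> (cc n * cc n / 2) / (pi^2/6)) (at_right 0)"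
    using ev by (rule Lim_transform_eventually)
  moreover have "(cc n * cc n / 2) / (pi^2/6) = 3 / ((real n + 1) ^ 4 * pi\<^sup>2)"
  proof -
    have gen: "(1/m^2 * (1/m^2) / 2) / (pi^2/6) = 3 / (m ^ 4 * pi\<^sup>2)" if "m > 0" for m :: real
      using that by (simp add: field_simps power2_eq_square power4_eq_xxxx)
    show ?thesis unfolding cc_def by (rule gen) simp
  qed
  ultimately show "((\<lambda>x. (1 / x\<^sup>2) * (1 - A n x / A (Suc n) x))
            \<longlongrightarrow> 3 / ((real n + 1) ^ 4 * pi\<^sup>2)) (at_right 0)" by simp
next
  have "zeta 2 = (\<Sum>k. 1 / (real k + 1)^2)"
    unfolding zeta_def by (simp add: add.commute)
  also have "\<dots> = pi^2/6" using inverse_squares_sums by (simp add: sums_iff add.commute)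
  finally have z: "zeta 2 = pi^2/6" .
  show "3 / ((real n + 1) ^ 4 * pi\<^sup>2) = 1 / (2 * (real n + 1) ^ 4 * zeta 2)"
    unfolding z by (simp add: field_simps)
qed

end
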